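(* Let $n,m\ge1$ be integers, $L>0$, $\lambda\in[0,1)$, and let $G_\alpha$ be the $3\times3$ matrix defined in the context. If $0<\alpha\le\min\Big\{\frac{(1-\lambda^2)^2}{35\lambda},\frac{\sqrt n}{\sqrt{8m}}\Big\}\frac1L$, then the spectral radius satisfies $\rho(G_\alpha)<1$; consequently $I_3-G_\alpha$ is invertible and $\sum_{k=0}^\infty G_\alpha^k=(I_3-G_\alpha)^{-1}$.
   Context: Expressions with $\lambda$ in a denominator are read as $+\infty$ when $\lambda=0$. The matrix $$G_\alpha:=\begin{bmatrix}\frac{1+\lambda^2}{2}&0&\frac{2\lambda^2\alpha^2L^2}{1-\lambda^2}\\ \frac9{4m}&1-\frac1{4m}&0\\ \frac{30.5}{1-\lambda^2}&\frac{97}8&\frac{1+\lambda^2}2\end{bmatrix}.$$ $\rho(\cdot)$ denotes spectral radius. *)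

theory Defs
  imports "Jordan_Normal_Form.Spectral_Radius"
begin

definition G_mat :: "real \<Rightarrow> real \<Rightarrow> real \<Rightarrow> nat \<Rightarrow> real mat" where
  "G_mat lam alpha L m = mat_of_rows_list 3
     [[(1 + lam^2) / 2, 0, 2 * lam^2 * alpha^2 * L^2 / (1 - lam^2)],
      [9 / (4 * real m), 1 - 1 / (4 * real m), 0],
      [30.5 / (1 - lam^2), 97 / 8, (1 + lam^2) / 2]]"

end

theory Submission imports Defs begin

lemma mult_entry:
  assumes "A \<in> carrier_mat n n" "B \<in> carrier_mat n n" "i < n" "j < n"
  shows "(A * B) $$ (i,j) = (\<Sum>l<n. A $$ (i,l) * B $$ (l,j))"
  using assms by (simp add: scalar_prod_def atLeast0LessThan)

lemma pow_comm:
  assumes "A \<in> carrier_mat n n"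
  shows "A * A ^\<^sub>m k = A ^\<^sub>m k * A"
proof (induction k)
  case 0 then show ?case using assms by simp
next
  case (Suc k)
  have "A * A ^\<^sub>m Suc k = (A * A ^\<^sub>m k) * A" using assms
    by (simp add: assoc_mult_mat[OF assms pow_carrier_mat[OF assms] assms, symmetric])
  also have "\<dots> = A ^\<^sub>m Suc k * A" using Suc assms by simp
  finally show ?case .
qed

locale posbound =
  fixes A :: "real mat" and n :: nat and v :: "nat \<Rightarrow> real" and c :: real
  assumes A: "A \<in> carrier_mat n n"
    and nonneg: "\<And>i j. i < n \<Longrightarrow> j < n \<Longrightarrow> A $$ (i,j) \<ge> 0"
    and vpos: "\<And>i. i < n \<Longrightarrow> v i > 0"
    and c0: "0 \<le> c" and c1: "c < 1"
    and rows: "\<And>i. i < n \<Longrightarrow> (\<Sum>j<n. A $$ (i,j) * v j) \<le> c * v i"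
begin

lemma pow_props:
  "(\<forall>i<n. \<forall>j<n. (A ^\<^sub>m k) $$ (i,j) \<ge> 0) \<and>
   (\<forall>i<n. (\<Sum>j<n. (A ^\<^sub>m k) $$ (i,j) * v j) \<le> c^k * v i)"
proof (induction k)
  case 0
  have "(\<Sum>j<n. (if i = j then 1 else 0) * v j) = v i" if "i < n" for i
  proof -
    have "(\<Sum>j<n. (if i = j then 1 else 0) * v j) = (\<Sum>j<n. if i = j then v j else 0)"
      by (rule sum.cong) auto
    then show ?thesis using that by simp
  qed
  then show ?case using A by auto
next
  case (Suc k)
  let ?P = "A ^\<^sub>m k"
  have P: "?P \<in> carrier_mat n n" using A by simp
  have e: "(A ^\<^sub>m Suc k) $$ (i,j) = (\<Sum>l<n. ?P $$ (i,l) * A $$ (l,j))" if "i<n" "j<n" for i j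
    using mult_entry[OF P A that] by simp
  have nn: "\<forall>i<n. \<forall>j<n. (A ^\<^sub>m Suc k) $$ (i,j) \<ge> 0"
  proof (intro allI impI)
    fix i j assume ij: "i < n" "j < n"
    show "(A ^\<^sub>m Suc k) $$ (i,j) \<ge> 0" unfolding e[OF ij]
      using Suc nonneg ij by (auto intro!: sum_nonneg mult_nonneg_nonneg)
  qed
  have "(\<Sum>j<n. (A ^\<^sub>m Suc k) $$ (i,j) * v j) \<le> c^(Suc k) * v i" if i: "i<n" for i
  proof -
    have "(\<Sum>j<n. (A ^\<^sub>m Suc k) $$ (i,j) * v j) = (\<Sum>j<n. \<Sum>l<n. ?P $$ (i,l) * A $$ (l,j) * v j)"
      using i by (intro sum.cong) (simp_all only: e sum_distrib_right lessThan_iff)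
    also have "\<dots> = (\<Sum>l<n. ?P $$ (i,l) * (\<Sum>j<n. A $$ (l,j) * v j))"
      by (subst sum.swap) (simp add: sum_distrib_left mult.assoc)
    also have "\<dots> \<le> (\<Sum>l<n. ?P $$ (i,l) * (c * v l))"
      using Suc i rows by (intro sum_mono mult_left_mono) auto
    also have "\<dots> = c * (\<Sum>l<n. ?P $$ (i,l) * v l)"
      by (simp add: sum_distrib_left algebra_simps)
    also have "\<dots> \<le> c * (c^k * v i)"
      using Suc i c0 by (intro mult_left_mono) auto
    finally show ?thesis by simp
  qed
  with nn show ?case by blast
qed

lemma pow_bound:
  assumes "i < n" "j < n"
  shows "0 \<le> (A ^\<^sub>m k) $$ (i,j)" "(A ^\<^sub>m k) $$ (i,j) \<le> c^k * (v i / v j)"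
proof -
  show "0 \<le> (A ^\<^sub>m k) $$ (i,j)" using pow_props assms by blast
  have "(A ^\<^sub>m k) $$ (i,j) * v j \<le> (\<Sum>j<n. (A ^\<^sub>m k) $$ (i,j) * v j)"
    using pow_props assms vpos
    by (intro member_le_sum mult_nonneg_nonneg) (auto intro: less_imp_le)
  also have "\<dots> \<le> c^k * v i" using pow_props assms by blast
  finally show "(A ^\<^sub>m k) $$ (i,j) \<le> c^k * (v i / v j)"
    using vpos[OF assms(2)] by (simp add: field_simps)
qed

lemma pow_summable:
  assumes "i < n" "j < n"
  shows "summable (\<lambda>k. (A ^\<^sub>m k) $$ (i,j))"
proof (rule summable_comparison_test)
  show "\<exists>N. \<forall>k\<ge>N. norm ((A ^\<^sub>m k) $$ (i,j)) \<le> c^k * (v i / v j)"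
    using pow_bound[OF assms] by auto
  show "summable (\<lambda>k. c^k * (v i / v j))"
    using c0 c1 by (intro summable_mult2 summable_geometric) auto
qed

lemma pow_lim0: assumes "i < n" "j < n" shows "(\<lambda>k. (A ^\<^sub>m k) $$ (i,j)) \<longlonglongrightarrow> 0"
  using summable_LIMSEQ_zero[OF pow_summable[OF assms]] .

definition "Binv = mat n n (\<lambda>(i,j). suminf (\<lambda>k. (A ^\<^sub>m k) $$ (i,j)))"

lemma Binv_carrier: "Binv \<in> carrier_mat n n" unfolding Binv_def by simp

lemma Binv_sums: assumes "i < n" "j < n"
  shows "(\<lambda>k. (A ^\<^sub>m k) $$ (i,j)) sums (Binv $$ (i,j))"
  using summable_sums[OF pow_summable[OF assms]] assms unfolding Binv_def by simp

lemma tele_right: "A ^\<^sub>m k * (1\<^sub>m n - A) = A ^\<^sub>m k - A ^\<^sub>m Suc k"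
proof -
  have "A ^\<^sub>m k * (1\<^sub>m n - A) = A ^\<^sub>m k * 1\<^sub>m n - A ^\<^sub>m k * A"
    using A by (intro mult_minus_distrib_mat[of _ n n]) auto
  then show ?thesis using A by simp
qed

lemma tele_left: "(1\<^sub>m n - A) * A ^\<^sub>m k = A ^\<^sub>m k - A ^\<^sub>m Suc k"
proof -
  have "(1\<^sub>m n - A) * A ^\<^sub>m k = 1\<^sub>m n * A ^\<^sub>m k - A * A ^\<^sub>m k"
    using A by (intro minus_mult_distrib_mat[of _ n n]) auto
  then show ?thesis using A pow_comm[OF A, of k] by simp
qed

lemma tele_sum:
  assumes "i < n" "j < n"
  shows "(\<Sum>k<N. (A ^\<^sub>m k - A ^\<^sub>m Suc k) $$ (i,j)) = 1\<^sub>m n $$ (i,j) - (A ^\<^sub>m N) $$ (i,j)"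
proof -
  have "(\<Sum>k<N. (A ^\<^sub>m k - A ^\<^sub>m Suc k) $$ (i,j)) = (\<Sum>k<N. (A ^\<^sub>m k) $$ (i,j) - (A ^\<^sub>m Suc k) $$ (i,j))"
    using assms A by (intro sum.cong) auto
  also have "\<dots> = (A ^\<^sub>m 0) $$ (i,j) - (A ^\<^sub>m N) $$ (i,j)"
    by (rule sum_lessThan_telescope')
  finally show ?thesis using A by simp
qed

lemma inv_right: "Binv * (1\<^sub>m n - A) = 1\<^sub>m n"
proof (rule eq_matI)
  fix i j assume "i < dim_row (1\<^sub>m n :: real mat)" "j < dim_col (1\<^sub>m n :: real mat)"
  then have ij: "i < n" "j < n" by auto
  let ?M = "1\<^sub>m n - A"
  have M: "?M \<in> carrier_mat n n" using A by (intro minus_carrier_mat) auto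
  have eq: "(\<Sum>k<N. (A ^\<^sub>m k * ?M) $$ (i,j)) = (\<Sum>l<n. (\<Sum>k<N. (A ^\<^sub>m k) $$ (i,l)) * ?M $$ (l,j))" for N
    using mult_entry[OF pow_carrier_mat[OF A] M ij]
    by (simp add: sum_distrib_right) (rule sum.swap)
  have l1: "(\<lambda>N. \<Sum>k<N. (A ^\<^sub>m k * ?M) $$ (i,j)) \<longlonglongrightarrow> 1\<^sub>m n $$ (i,j)"
    unfolding tele_right tele_sum[OF ij]
    using tendsto_diff[OF tendsto_const pow_lim0[OF ij]] by simp
  have l2: "(\<lambda>N. \<Sum>k<N. (A ^\<^sub>m k * ?M) $$ (i,j)) \<longlonglongrightarrow> (\<Sum>l<n. Binv $$ (i,l) * ?M $$ (l,j))"
    unfolding eq using Binv_sums ij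
    by (intro tendsto_intros) (auto simp: sums_def)
  have "(Binv * ?M) $$ (i,j) = (\<Sum>l<n. Binv $$ (i,l) * ?M $$ (l,j))"
    using mult_entry[OF Binv_carrier M ij] .
  also have "\<dots> = 1\<^sub>m n $$ (i,j)" using LIMSEQ_unique[OF l2 l1] .
  finally show "(Binv * ?M) $$ (i,j) = 1\<^sub>m n $$ (i,j)" .
next
  show "dim_row (Binv * (1\<^sub>m n - A)) = dim_row (1\<^sub>m n :: real mat)" using Binv_carrier by simp
  show "dim_col (Binv * (1\<^sub>m n - A)) = dim_col (1\<^sub>m n :: real mat)" using A by simp
qed

lemma inv_left: "(1\<^sub>m n - A) * Binv = 1\<^sub>m n"
proof (rule eq_matI)
  fix i j assume "i < dim_row (1\<^sub>m n :: real mat)" "j < dim_col (1\<^sub>m n :: real mat)"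
  then have ij: "i < n" "j < n" by auto
  let ?M = "1\<^sub>m n - A"
  have M: "?M \<in> carrier_mat n n" using A by (intro minus_carrier_mat) auto
  have eq: "(\<Sum>k<N. (?M * A ^\<^sub>m k) $$ (i,j)) = (\<Sum>l<n. ?M $$ (i,l) * (\<Sum>k<N. (A ^\<^sub>m k) $$ (l,j)))" for N
    using mult_entry[OF M pow_carrier_mat[OF A] ij]
    by (simp add: sum_distrib_left) (rule sum.swap)
  have l1: "(\<lambda>N. \<Sum>k<N. (?M * A ^\<^sub>m k) $$ (i,j)) \<longlonglongrightarrow> 1\<^sub>m n $$ (i,j)"
    unfolding tele_left tele_sum[OF ij]
    using tendsto_diff[OF tendsto_const pow_lim0[OF ij]] by simp
  have l2: "(\<lambda>N. \<Sum>k<N. (?M * A ^\<^sub>m k) $$ (i,j)) \<longlonglongrightarrow> (\<Sum>l<n. ?M $$ (i,l) * Binv $$ (l,j))"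
    unfolding eq using Binv_sums ij
    by (intro tendsto_intros) (auto simp: sums_def)
  have "(?M * Binv) $$ (i,j) = (\<Sum>l<n. ?M $$ (i,l) * Binv $$ (l,j))"
    using mult_entry[OF M Binv_carrier ij] .
  also have "\<dots> = 1\<^sub>m n $$ (i,j)" using LIMSEQ_unique[OF l2 l1] .
  finally show "(?M * Binv) $$ (i,j) = 1\<^sub>m n $$ (i,j)" .
next
  show "dim_row ((1\<^sub>m n - A) * Binv) = dim_row (1\<^sub>m n :: real mat)" using A by simp
  show "dim_col ((1\<^sub>m n - A) * Binv) = dim_col (1\<^sub>m n :: real mat)" using Binv_carrier by simp
qed

lemma eig_bound:
  assumes ev: "eigenvalue (map_mat complex_of_real A) \<mu>"
  shows "cmod \<mu> \<le> c"
proof -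
  let ?A = "map_mat complex_of_real A"
  from ev obtain x where x: "x \<in> carrier_vec n" "x \<noteq> 0\<^sub>v n" "?A *\<^sub>v x = \<mu> \<cdot>\<^sub>v x"
    unfolding eigenvalue_def eigenvector_def using A by auto
  define y where "y i = cmod (x $ i)" for i
  have ey: "cmod \<mu> * y i \<le> (\<Sum>j<n. A $$ (i,j) * y j)" if i: "i < n" for i
  proof -
    have "\<mu> * x $ i = (?A *\<^sub>v x) $ i" using x(1,3) i by simp
    also have "\<dots> = (\<Sum>j<n. complex_of_real (A $$ (i,j)) * x $ j)"
      using x(1) i A by (simp add: scalar_prod_def atLeast0LessThan)
    finally have "cmod \<mu> * y i = cmod (\<Sum>j<n. complex_of_real (A $$ (i,j)) * x $ j)"
      unfolding y_def by (metis norm_mult)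
    also have "\<dots> \<le> (\<Sum>j<n. cmod (complex_of_real (A $$ (i,j)) * x $ j))" by (rule norm_sum)
    also have "\<dots> = (\<Sum>j<n. A $$ (i,j) * y j)"
      using nonneg i by (intro sum.cong) (auto simp: y_def norm_mult)
    finally show ?thesis .
  qed
  have n0: "n > 0" using x by (cases n) auto
  define t where "t = Max ((\<lambda>i. y i / v i) ` {..<n})"
  have fin: "finite ((\<lambda>i. y i / v i) ` {..<n})" "(\<lambda>i. y i / v i) ` {..<n} \<noteq> {}" using n0 by auto
  obtain i0 where i0: "i0 < n" "t = y i0 / v i0" using Max_in[OF fin] unfolding t_def by auto
  have yle: "y j \<le> t * v j" if "j < n" for j
  proof -
    have "y j / v j \<le> t" unfolding t_def using fin that by (intro Max_ge) auto
    then show ?thesis using vpos[OF that] by (simp add: field_simps)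
  qed
  obtain k where k: "k < n" "x $ k \<noteq> 0"
    using x(1,2) by (metis carrier_vecD eq_vecI index_zero_vec)
  have "0 < y k / v k" using k vpos[OF k(1)] by (simp add: y_def)
  also have "\<dots> \<le> t" unfolding t_def using fin k by (intro Max_ge) auto
  finally have t0: "t > 0" .
  have y0: "y i0 > 0" using i0 t0 vpos[OF i0(1)] by (simp add: field_simps) (metis mult_pos_pos)
  have "cmod \<mu> * y i0 \<le> (\<Sum>j<n. A $$ (i0,j) * y j)" using ey i0 by simp
  also have "\<dots> \<le> (\<Sum>j<n. A $$ (i0,j) * (t * v j))"
    using yle nonneg i0 by (intro sum_mono mult_left_mono) auto
  also have "\<dots> = t * (\<Sum>j<n. A $$ (i0,j) * v j)" by (simp add: sum_distrib_left algebra_simps)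
  also have "\<dots> \<le> t * (c * v i0)" using rows[OF i0(1)] t0 by simp
  also have "\<dots> = c * y i0" using i0 vpos[OF i0(1)] by (simp add: field_simps)
  finally show ?thesis using y0 by simp
qed

lemma sr_bound: assumes "n > 0" shows "spectral_radius (map_mat complex_of_real A) < 1"
proof -
  have "map_mat complex_of_real A \<in> carrier_mat n n" using A by simp
  from spectral_radius_mem_max(1)[OF this assms] obtain \<mu> where
    "spectral_radius (map_mat complex_of_real A) = cmod \<mu>" "\<mu> \<in> spectrum (map_mat complex_of_real A)"
    by auto
  then show ?thesis using eig_bound c1 unfolding spectrum_def by fastforce
qed

end

lemma sum3: "(\<Sum>j<3. f j) = f (0::nat) + f 1 + (f 2 :: real)"
  by (simp add: numeral_3_eq_3 numeral_2_eq_2 add.assoc)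

lemma lt3: "(i::nat) < 3 \<Longrightarrow> i = 0 \<or> i = 1 \<or> i = 2" by auto

lemma morl: "i < length rs \<Longrightarrow> j < nc \<Longrightarrow> mat_of_rows_list nc rs $$ (i,j) = rs ! i ! j"
  unfolding mat_of_rows_list_def by simp

lemma G_entries:
  "G_mat lam alpha L m \<in> carrier_mat 3 3"
  "G_mat lam alpha L m $$ (0,0) = (1 + lam^2) / 2"
  "G_mat lam alpha L m $$ (0,1) = 0"
  "G_mat lam alpha L m $$ (0,2) = 2 * lam^2 * alpha^2 * L^2 / (1 - lam^2)"
  "G_mat lam alpha L m $$ (1,0) = 9 / (4 * real m)"
  "G_mat lam alpha L m $$ (1,1) = 1 - 1 / (4 * real m)"
  "G_mat lam alpha L m $$ (1,2) = 0"
  "G_mat lam alpha L m $$ (2,0) = 30.5 / (1 - lam^2)"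
  "G_mat lam alpha L m $$ (2,1) = 97 / 8"
  "G_mat lam alpha L m $$ (2,2) = (1 + lam^2) / 2"
  unfolding G_mat_def
  apply (unfold mat_of_rows_list_def carrier_mat_def, simp only: dim_row_mat dim_col_mat list.size, simp)[1]
  by (subst morl, simp, simp, simp only: One_nat_def numeral_2_eq_2 nth_Cons_0 nth_Cons_Suc)+

theorem lemma14:
  fixes n m :: nat and L lam alpha :: real
  assumes "n \<ge> 1" and "m \<ge> 1" and "L > 0"
    and "0 \<le> lam" and "lam < 1"
    and "0 < alpha"
    and "alpha \<le> sqrt (real n) / sqrt (8 * real m) * (1 / L)"
    and "lam > 0 \<Longrightarrow> alpha \<le> (1 - lam^2)^2 / (35 * lam) * (1 / L)"
  shows "spectral_radius (map_mat complex_of_real (G_mat lam alpha L m)) < 1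
    \<and> invertible_mat (1\<^sub>m 3 - G_mat lam alpha L m)
    \<and> (\<exists>B \<in> carrier_mat 3 3.
          inverts_mat (1\<^sub>m 3 - G_mat lam alpha L m) B
        \<and> inverts_mat B (1\<^sub>m 3 - G_mat lam alpha L m)
        \<and> (\<forall>i < 3. \<forall>j < 3.
              (\<lambda>k. (G_mat lam alpha L m ^\<^sub>m k) $$ (i, j)) sums (B $$ (i, j))))"
proof -
  let ?G = "G_mat lam alpha L m"
  define d where "d = 1 - lam^2"
  have lam2: "lam^2 < 1" using assms(4,5) by (simp add: power_less_one_iff)
  have d0: "0 < d" "d \<le> 1" using lam2 unfolding d_def by auto
  define e where "e = 2 * lam^2 * alpha^2 * L^2 / d"
  have e0: "0 \<le> e" unfolding e_def using d0 by simp
  have ebound: "e \<le> 2 * d^3 / 1225"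
  proof (cases "lam = 0")
    case True then show ?thesis unfolding e_def using d0 by simp
  next
    case False
    then have lp: "lam > 0" using assms(4) by simp
    have h: "alpha \<le> d^2 / (35 * lam) * (1 / L)" using assms(8)[OF lp] unfolding d_def .
    have "alpha * L \<le> d^2 / (35 * lam) * (1 / L) * L"
      using h assms(3) by (intro mult_right_mono) auto
    then have w: "alpha * L \<le> d^2 / (35 * lam)" using assms(3) by simp
    have "(alpha * L)^2 \<le> (d^2 / (35 * lam))^2"
      using w assms(3,6) by (intro power_mono) auto
    then have "lam^2 * (alpha * L)^2 \<le> lam^2 * (d^2 / (35 * lam))^2"
      by (intro mult_left_mono) auto
    also have "\<dots> = d^4 / 1225" using lp by (simp add: field_simps)
    finally have h: "lam^2 * alpha^2 * L^2 \<le> d^4 / 1225" by (simp add: power_mult_distrib)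
    have "e = 2 * (lam^2 * alpha^2 * L^2) / d" unfolding e_def by simp
    also have "\<dots> \<le> 2 * (d^4 / 1225) / d" using h d0 by (intro divide_right_mono mult_left_mono) auto
    also have "\<dots> = 2 * d^3 / 1225" using d0 by (simp add: field_simps power_eq_if)
    finally show ?thesis .
  qed
  define v :: "nat \<Rightarrow> real" where "v i = (if i = 0 then 1 else if i = 1 then 10 else 305 / d^2)" for i
  have vpos: "v i > 0" for i unfolding v_def using d0 by auto
  have Gv: "G_mat lam alpha L m $$ (0,0) = 1 - d/2"
    "G_mat lam alpha L m $$ (0,2) = e"
    "G_mat lam alpha L m $$ (2,0) = 30.5 / d"
    "G_mat lam alpha L m $$ (2,2) = 1 - d/2"
    "G_mat lam alpha L m $$ (0,1) = 0"
    "G_mat lam alpha L m $$ (1,0) = 9 / (4 * real m)"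
    "G_mat lam alpha L m $$ (1,1) = 1 - 1 / (4 * real m)"
    "G_mat lam alpha L m $$ (1,2) = 0"
    "G_mat lam alpha L m $$ (2,1) = 97 / 8"
    using G_entries unfolding d_def e_def by (auto simp: field_simps)
  have m1: "real m \<ge> 1" using assms(2) by simp
  have m4: "1 / (4 * real m) \<le> 1" "0 < 1 - lam^2" using m1 lam2 by (auto simp: field_simps)
  define r where "r i = (\<Sum>j<3. ?G $$ (i,j) * v j) / v i" for i
  have rlt: "r i < 1" if i3: "i < 3" for i
  proof -
    have "(\<Sum>j<3. ?G $$ (i,j) * v j) < v i"
    proof -
      consider "i = 0" | "i = 1" | "i = 2" using lt3[OF i3] by auto
      then show ?thesis
      proof cases
        case 1
        have "e * (305 / d^2) \<le> 2 * d^3 / 1225 * (305 / d^2)"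
          using ebound d0 by (intro mult_right_mono) auto
        also have "\<dots> = 610 * d / 1225" using d0 by (simp add: field_simps power_eq_if)
        finally have "e * (305 / d^2) < d / 2" using d0 by linarith
        then show ?thesis using 1 by (simp only: sum3, simp add: Gv Gv[unfolded One_nat_def] v_def)
      next
        case 2
        have "9 / (4 * real m) < 10 / (4 * real m)" using m1 by (intro divide_strict_right_mono) auto
        then show ?thesis using 2 m1 by (simp only: sum3, simp add: Gv Gv[unfolded One_nat_def] v_def field_simps)
      next
        case 3
        have dd: "d^2 \<le> d" using d0 by (simp add: power2_eq_square mult_left_le)
        have "(485/4) * d^2 \<le> (485/4) * d" using dd by simp
        then have "30.5 * d + 121.25 * d^2 < 152.5 * d" using d0 by simp
        then have "(30.5 * d + 121.25 * d^2) / d^2 < (152.5 * d) / d^2"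
          using d0 by (intro divide_strict_right_mono) auto
        then have "30.5 / d + 97 / 8 * 10 + (1 - d/2) * (305 / d^2) < 305 / d^2"
          using d0 by (simp add: field_simps power2_eq_square)
        then show ?thesis using 3 by (simp only: sum3, simp add: Gv Gv[unfolded One_nat_def] v_def)
      qed
    qed
    then show ?thesis unfolding r_def using vpos[of i] by simp
  qed
  have rnn: "r i \<ge> 0" if "i < 3" for i
  proof -
    have "?G $$ (i,j) \<ge> 0" if "j < 3" for j
      using lt3[OF \<open>i < 3\<close>] lt3[OF that] m1 lam2 m4 by (auto simp: G_entries G_entries[unfolded One_nat_def])
    then show ?thesis unfolding r_def using vpos
      by (intro divide_nonneg_pos sum_nonneg mult_nonneg_nonneg) (auto intro: less_imp_le)
  qed
  define c where "c = max (r 0) (max (r 1) (r 2))"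
  interpret P: posbound ?G 3 v c
  proof
    show "?G \<in> carrier_mat 3 3" by (rule G_entries)
    show "?G $$ (i,j) \<ge> 0" if "i < 3" "j < 3" for i j
      using lt3[OF that(1)] lt3[OF that(2)] m1 lam2 m4 by (auto simp: G_entries G_entries[unfolded One_nat_def])
    show "v i > 0" for i by (rule vpos)
    show "0 \<le> c" unfolding c_def using rnn[of 0] by simp
    show "c < 1" unfolding c_def using rlt[of 0] rlt[of 1] rlt[of 2] by simp
    show "(\<Sum>j<3. ?G $$ (i,j) * v j) \<le> c * v i" if "i < 3" for i
    proof -
      have "r i \<le> c" unfolding c_def using lt3[OF that] by auto
      then have "r i * v i \<le> c * v i" using vpos[of i] by (intro mult_right_mono) (auto intro: less_imp_le)
      then show ?thesis unfolding r_def using vpos[of i] by simp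
    qed
  qed
  have inv: "inverts_mat (1\<^sub>m 3 - ?G) P.Binv" "inverts_mat P.Binv (1\<^sub>m 3 - ?G)"
    unfolding inverts_mat_def using P.inv_left P.inv_right P.Binv_carrier carrier_matD(1)[OF G_entries(1)] by auto
  show ?thesis
  proof (intro conjI bexI[of _ P.Binv] allI impI)
    show "spectral_radius (map_mat complex_of_real ?G) < 1" by (rule P.sr_bound) simp
    show "invertible_mat (1\<^sub>m 3 - ?G)" unfolding invertible_mat_def
      using inv carrier_matD[OF G_entries(1)] by (auto simp: square_mat.simps)
  qed (use inv P.Binv_carrier P.Binv_sums in auto)
qed

end
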